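(* For all $k\ge1$ and $n\ge0$, $\gamma_k(n)=\frac1k\,b_k(n+1)$.
   Context: Let $G=\{g_1=e,\dots,g_k\}$ be a group of order $k$. A labeled graph on $G$ with $n$ edges has vertex set $G$ and $n$ directed edges labeled $1,\dots,n$, edge $i$ being an ordered pair of vertices (loops and multiple edges allowed); there are $k^{2n}$ such graphs. The degree of a vertex is the number of edges having it as initial or terminal point, a loop counted twice. A graph is balanced if every vertex has even degree; $b_k(n)$ is the number of balanced labeled graphs on $G$ with $n$ edges. A graph has an Eulerian pseudo-path from $e$ to $g_i$ if: all vertices other than $e,g_i$ have even degree; if $g_i=e$ then $\deg e$ is even; if $g_i\ne e$ then $\deg e$ and $\deg g_i$ are odd (no connectivity required). $\gamma_k(n)$ is the number of labeled graphs on $G$ with $n$ edges having an Eulerian pseudo-path from $e$ to some vertex $g_i$, $1\le i\le k$. *)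

theory Defs
  imports Complex_Main "HOL-Algebra.Group" "HOL-Library.FuncSet"
begin

text \<open>Labeled graphs with n edges on vertex set V: edge i (for i in 0..<n, standing for
labels 1..n) is an ordered pair of vertices.\<close>
definition labeled_graphs :: "'a set \<Rightarrow> nat \<Rightarrow> (nat \<Rightarrow> 'a \<times> 'a) set" where
  "labeled_graphs V n = {0..<n} \<rightarrow>\<^sub>E (V \<times> V)"

definition gdeg :: "nat \<Rightarrow> (nat \<Rightarrow> 'a \<times> 'a) \<Rightarrow> 'a \<Rightarrow> nat" where
  "gdeg n g v = (\<Sum>i<n. (if fst (g i) = v then 1 else 0) + (if snd (g i) = v then 1 else 0))"

definition balanced :: "'a set \<Rightarrow> nat \<Rightarrow> (nat \<Rightarrow> 'a \<times> 'a) \<Rightarrow> bool" where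
  "balanced V n g \<longleftrightarrow> (\<forall>v\<in>V. even (gdeg n g v))"

definition eulerian_pseudo_path ::
  "'a set \<Rightarrow> nat \<Rightarrow> (nat \<Rightarrow> 'a \<times> 'a) \<Rightarrow> 'a \<Rightarrow> 'a \<Rightarrow> bool" where
  "eulerian_pseudo_path V n g e x \<longleftrightarrow>
     (\<forall>v\<in>V. v \<noteq> e \<and> v \<noteq> x \<longrightarrow> even (gdeg n g v)) \<and>
     (x = e \<longrightarrow> even (gdeg n g e)) \<and>
     (x \<noteq> e \<longrightarrow> odd (gdeg n g e) \<and> odd (gdeg n g x))"

definition b_count :: "('a, 'b) monoid_scheme \<Rightarrow> nat \<Rightarrow> nat" where
  "b_count G n = card {g \<in> labeled_graphs (carrier G) n. balanced (carrier G) n g}"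

definition gamma_count :: "('a, 'b) monoid_scheme \<Rightarrow> nat \<Rightarrow> nat" where
  "gamma_count G n = card {g \<in> labeled_graphs (carrier G) n.
      \<exists>x\<in>carrier G. eulerian_pseudo_path (carrier G) n g \<one>\<^bsub>G\<^esub> x}"

end

theory Submission
  imports Defs
begin

definition trg :: "('a, 'b) monoid_scheme \<Rightarrow> 'a \<Rightarrow> nat \<Rightarrow> (nat \<Rightarrow> 'a \<times> 'a) \<Rightarrow> nat \<Rightarrow> 'a \<times> 'a" where
  "trg G a n g = (\<lambda>i. if i < n then (a \<otimes>\<^bsub>G\<^esub> fst (g i), a \<otimes>\<^bsub>G\<^esub> snd (g i)) else undefined)"

lemma gdeg_cong: "(\<And>i. i < n \<Longrightarrow> g i = g' i) \<Longrightarrow> gdeg n g v = gdeg n g' v"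
  unfolding gdeg_def by (auto intro!: sum.cong)

lemma gdeg_Suc: "gdeg (Suc n) g v = gdeg n g v + (if fst (g n) = v then 1 else 0) + (if snd (g n) = v then 1 else 0)"
  unfolding gdeg_def by simp

lemma epp_iff:
  assumes "e \<in> V" "x \<in> V"
  shows "eulerian_pseudo_path V n g e x \<longleftrightarrow>
    (\<forall>w\<in>V. even (gdeg n g w + (if w = e then 1 else 0) + (if w = x then 1 else 0)))"
proof
  assume H: "eulerian_pseudo_path V n g e x"
  show "\<forall>w\<in>V. even (gdeg n g w + (if w = e then 1 else 0) + (if w = x then 1 else 0))"
  proof
    fix w assume "w \<in> V"
    then show "even (gdeg n g w + (if w = e then 1 else 0) + (if w = x then 1 else 0))"
      using H unfolding eulerian_pseudo_path_def
      by (cases "w = e"; cases "w = x"; cases "x = e"; auto)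
  qed
next
  assume H: "\<forall>w\<in>V. even (gdeg n g w + (if w = e then 1 else 0) + (if w = x then 1 else 0))"
  have a: "even (gdeg n g w)" if "w \<in> V" "w \<noteq> e" "w \<noteq> x" for w
    using H that by force
  have b: "even (gdeg n g e)" if "x = e"
    using bspec[OF H assms(1)] that by simp
  have c: "odd (gdeg n g e) \<and> odd (gdeg n g x)" if "x \<noteq> e"
  proof -
    have "even (gdeg n g e + 1)" using bspec[OF H assms(1)] that by simp
    moreover have "even (gdeg n g x + 1)" using bspec[OF H assms(2)] that by simp
    ultimately show ?thesis by simp
  qed
  show "eulerian_pseudo_path V n g e x"
    unfolding eulerian_pseudo_path_def using a b c by blast
qed

context group
begin

lemma mult_eq_iff: "a \<in> carrier G \<Longrightarrow> y \<in> carrier G \<Longrightarrow> v \<in> carrier G \<Longrightarrow> (a \<otimes> y = v) = (y = inv a \<otimes> v)"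
  by (metis inv_solve_left)

lemma gdeg_trg:
  assumes "a \<in> carrier G" "\<And>i. i < n \<Longrightarrow> g i \<in> carrier G \<times> carrier G" "v \<in> carrier G"
  shows "gdeg n (trg G a n g) v = gdeg n g (inv a \<otimes> v)"
  unfolding gdeg_def trg_def
proof (rule sum.cong)
  fix i assume "i \<in> {..<n}"
  then have "fst (g i) \<in> carrier G" "snd (g i) \<in> carrier G" using assms(2)[of i] by (auto simp: mem_Times_iff)
  then show "(if fst (if i < n then (a \<otimes> fst (g i), a \<otimes> snd (g i)) else undefined) = v then 1 else 0) +
         (if snd (if i < n then (a \<otimes> fst (g i), a \<otimes> snd (g i)) else undefined) = v then 1 else 0) =
         (if fst (g i) = inv a \<otimes> v then 1 else 0) + (if snd (g i) = inv a \<otimes> v then 1 else 0)"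
    using \<open>i \<in> {..<n}\<close> assms(1,3) by (simp add: mult_eq_iff)
qed simp

end


lemma lg_iff: "g \<in> labeled_graphs V m \<longleftrightarrow> (\<forall>i<m. g i \<in> V \<times> V) \<and> (\<forall>i. m \<le> i \<longrightarrow> g i = undefined)"
  unfolding labeled_graphs_def PiE_def extensional_def Pi_def by auto

lemma lg_finite: "finite V \<Longrightarrow> finite (labeled_graphs V m)"
  unfolding labeled_graphs_def by (intro finite_PiE) auto

theorem mainTheorem12:
  fixes G :: "('a, 'b) monoid_scheme" and k n :: nat
  assumes "group G" and "finite (carrier G)" and "card (carrier G) = k" and "k \<ge> 1"
  shows "real (gamma_count G n) = real (b_count G (n + 1)) / real k"
proof -
  interpret group G by fact
  define C where "C = carrier G"
  define B where "B = {h \<in> labeled_graphs C (Suc n). balanced C (Suc n) h}"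
  define \<Gamma> where "\<Gamma> = {g \<in> labeled_graphs C n. \<exists>x\<in>C. eulerian_pseudo_path C n g \<one>\<^bsub>G\<^esub> x}"
  define F where "F = (\<lambda>h::nat \<Rightarrow> 'a \<times> 'a. (fst (h n), trg G (inv\<^bsub>G\<^esub> fst (h n)) n h))"
  define xs where "xs = (\<lambda>g. SOME x. x \<in> C \<and> eulerian_pseudo_path C n g \<one>\<^bsub>G\<^esub> x)"
  define H where "H = (\<lambda>(a, g::nat \<Rightarrow> 'a \<times> 'a). \<lambda>i. if i < n then (a \<otimes>\<^bsub>G\<^esub> fst (g i), a \<otimes>\<^bsub>G\<^esub> snd (g i))
       else if i = n then (a, a \<otimes>\<^bsub>G\<^esub> xs g) else undefined)"
  have fin: "finite C" using assms(2) C_def by simp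
  have finB: "finite B" unfolding B_def using lg_finite[OF fin] by simp
  have finG: "finite (C \<times> \<Gamma>)" unfolding \<Gamma>_def using lg_finite[OF fin] fin by simp
  have FB: "F ` B \<subseteq> C \<times> \<Gamma>"
  proof
    fix p assume "p \<in> F ` B"
    then obtain h where h: "h \<in> B" and p: "p = F h" by auto
    have hl: "\<forall>i<Suc n. h i \<in> C \<times> C" "\<forall>i. Suc n \<le> i \<longrightarrow> h i = undefined"
      using h unfolding B_def lg_iff by auto
    have bal: "\<forall>v\<in>C. even (gdeg (Suc n) h v)" using h unfolding B_def balanced_def by auto
    define u where "u = fst (h n)"
    define v where "v = snd (h n)"
    have u: "u \<in> C" and v: "v \<in> C" using hl(1) u_def v_def by (auto simp: mem_Times_iff)
    define g' where "g' = trg G (inv\<^bsub>G\<^esub> u) n h"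
    have hi: "h i \<in> carrier G \<times> carrier G" if "i < n" for i using hl(1) that C_def by auto
    have g'l: "g' \<in> labeled_graphs C n"
      unfolding lg_iff g'_def trg_def using hi u C_def by (auto simp: mem_Times_iff)
    define x where "x = inv\<^bsub>G\<^esub> u \<otimes>\<^bsub>G\<^esub> v"
    have x: "x \<in> C" using u v C_def x_def by simp
    have "eulerian_pseudo_path C n g' \<one>\<^bsub>G\<^esub> x"
    proof (subst epp_iff)
      show "\<one>\<^bsub>G\<^esub> \<in> C" using C_def by simp
      show "x \<in> C" by fact
      show "\<forall>w\<in>C. even (gdeg n g' w + (if w = \<one>\<^bsub>G\<^esub> then 1 else 0) + (if w = x then 1 else 0))"
      proof
        fix w assume w: "w \<in> C"
        have uw: "u \<otimes>\<^bsub>G\<^esub> w \<in> C" using u w C_def by simp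
        have d: "gdeg n g' w = gdeg n h (u \<otimes>\<^bsub>G\<^esub> w)"
          unfolding g'_def using gdeg_trg[of "inv\<^bsub>G\<^esub> u" n h w] hi u w C_def by simp
        have e1: "(u = u \<otimes>\<^bsub>G\<^esub> w) = (w = \<one>\<^bsub>G\<^esub>)" using u w C_def
          by (metis l_cancel_one)
        have e2: "(v = u \<otimes>\<^bsub>G\<^esub> w) = (w = x)" using u w v C_def x_def
          by (metis mult_eq_iff)
        show "even (gdeg n g' w + (if w = \<one>\<^bsub>G\<^esub> then 1 else 0) + (if w = x then 1 else 0))"
          using bal uw gdeg_Suc[of n h "u \<otimes>\<^bsub>G\<^esub> w"] d e1 e2 u_def v_def by auto
      qed
    qed
    then have "g' \<in> \<Gamma>" using g'l x unfolding \<Gamma>_def by auto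
    then show "p \<in> C \<times> \<Gamma>" using p u unfolding F_def g'_def u_def by simp
  qed
  have injF: "inj_on F B"
  proof
    fix h1 h2 assume h1: "h1 \<in> B" and h2: "h2 \<in> B" and eq: "F h1 = F h2"
    have hl1: "\<forall>i<Suc n. h1 i \<in> C \<times> C" "\<forall>i. Suc n \<le> i \<longrightarrow> h1 i = undefined"
      using h1 unfolding B_def lg_iff by auto
    have hl2: "\<forall>i<Suc n. h2 i \<in> C \<times> C" "\<forall>i. Suc n \<le> i \<longrightarrow> h2 i = undefined"
      using h2 unfolding B_def lg_iff by auto
    have bal1: "\<forall>v\<in>C. even (gdeg (Suc n) h1 v)" using h1 unfolding B_def balanced_def by auto
    have bal2: "\<forall>v\<in>C. even (gdeg (Suc n) h2 v)" using h2 unfolding B_def balanced_def by auto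
    define u where "u = fst (h1 n)"
    have u2: "fst (h2 n) = u" using eq unfolding F_def u_def by simp
    have u: "u \<in> C" using hl1(1) u_def by (auto simp: mem_Times_iff)
    have tr: "trg G (inv\<^bsub>G\<^esub> u) n h1 = trg G (inv\<^bsub>G\<^esub> u) n h2" using eq u2 unfolding F_def u_def by simp
    have below: "h1 i = h2 i" if i: "i < n" for i
    proof -
      have "trg G (inv\<^bsub>G\<^esub> u) n h1 i = trg G (inv\<^bsub>G\<^esub> u) n h2 i" using tr by simp
      then have a: "inv\<^bsub>G\<^esub> u \<otimes>\<^bsub>G\<^esub> fst (h1 i) = inv\<^bsub>G\<^esub> u \<otimes>\<^bsub>G\<^esub> fst (h2 i)"
        and b: "inv\<^bsub>G\<^esub> u \<otimes>\<^bsub>G\<^esub> snd (h1 i) = inv\<^bsub>G\<^esub> u \<otimes>\<^bsub>G\<^esub> snd (h2 i)"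
        using i unfolding trg_def by auto
      have c: "fst (h1 i) \<in> carrier G" "snd (h1 i) \<in> carrier G" "fst (h2 i) \<in> carrier G" "snd (h2 i) \<in> carrier G"
        using hl1(1) hl2(1) i C_def by (auto simp: mem_Times_iff)
      have "fst (h1 i) = fst (h2 i)" using a c u C_def by (metis inv_closed Units_eq Units_l_cancel)
      moreover have "snd (h1 i) = snd (h2 i)" using b c u C_def by (metis inv_closed Units_eq Units_l_cancel)
      ultimately show ?thesis by (simp add: prod_eq_iff)
    qed
    have atn: "h1 n = h2 n"
    proof -
      define v1 where "v1 = snd (h1 n)"
      define v2 where "v2 = snd (h2 n)"
      have v1: "v1 \<in> C" using hl1(1) v1_def by (auto simp: mem_Times_iff)
      have dd: "gdeg n h1 v1 = gdeg n h2 v1" using below by (intro gdeg_cong) auto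
      have "even (gdeg (Suc n) h1 v1)" "even (gdeg (Suc n) h2 v1)" using bal1 bal2 v1 by auto
      then have "v2 = v1" using dd gdeg_Suc[of n h1 v1] gdeg_Suc[of n h2 v1] u2 u_def v1_def v2_def
        by (auto split: if_splits)
      then show ?thesis using u2 u_def v1_def v2_def by (simp add: prod_eq_iff)
    qed
    show "h1 = h2"
    proof
      fix i show "h1 i = h2 i"
        using below atn hl1(2) hl2(2) by (cases "i < n"; cases "i = n"; auto)
    qed
  qed
  have HG: "H ` (C \<times> \<Gamma>) \<subseteq> B"
  proof
    fix h assume "h \<in> H ` (C \<times> \<Gamma>)"
    then obtain a g where a: "a \<in> C" and g: "g \<in> \<Gamma>" and hdef: "h = H (a, g)" by auto
    have gl: "\<forall>i<n. g i \<in> C \<times> C" using g unfolding \<Gamma>_def lg_iff by auto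
    have gi: "g i \<in> carrier G \<times> carrier G" if "i < n" for i using gl that C_def by auto
    have "\<exists>x. x \<in> C \<and> eulerian_pseudo_path C n g \<one>\<^bsub>G\<^esub> x" using g unfolding \<Gamma>_def by auto
    then have xg: "xs g \<in> C \<and> eulerian_pseudo_path C n g \<one>\<^bsub>G\<^esub> (xs g)"
      unfolding xs_def by (rule someI_ex)
    have one: "\<one>\<^bsub>G\<^esub> \<in> C" using C_def by simp
    have par: "\<forall>w\<in>C. even (gdeg n g w + (if w = \<one>\<^bsub>G\<^esub> then 1 else 0) + (if w = xs g then 1 else 0))"
      using xg epp_iff[OF one, of "xs g" n g] by auto
    have hl: "h \<in> labeled_graphs C (Suc n)"
      unfolding lg_iff hdef H_def using gi a xg C_def by (auto simp: mem_Times_iff)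
    have "balanced C (Suc n) h"
      unfolding balanced_def
    proof
      fix v assume v: "v \<in> C"
      define w where "w = inv\<^bsub>G\<^esub> a \<otimes>\<^bsub>G\<^esub> v"
      have w: "w \<in> C" using a v w_def C_def by simp
      have c1: "gdeg n h v = gdeg n (trg G a n g) v"
        by (rule gdeg_cong) (simp add: hdef H_def trg_def)
      have c2: "gdeg n (trg G a n g) v = gdeg n g w"
        unfolding w_def using gdeg_trg[of a n g v] a v gi C_def by simp
      have e1: "(a = v) = (w = \<one>\<^bsub>G\<^esub>)" using a v C_def w_def
        by (metis mult_eq_iff r_one one_closed)
      have e2: "(a \<otimes>\<^bsub>G\<^esub> xs g = v) = (xs g = w)" using a v xg C_def w_def
        by (metis mult_eq_iff)
      have hn: "h n = (a, a \<otimes>\<^bsub>G\<^esub> xs g)" by (simp add: hdef H_def)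
      show "even (gdeg (Suc n) h v)"
        using gdeg_Suc[of n h v] c1 c2 e1 e2 hn par w by auto
    qed
    then show "h \<in> B" using hl unfolding B_def by simp
  qed
  have injH: "inj_on H (C \<times> \<Gamma>)"
  proof
    fix p q assume p: "p \<in> C \<times> \<Gamma>" and q: "q \<in> C \<times> \<Gamma>" and eq: "H p = H q"
    obtain a g where pa: "p = (a, g)" by (cases p)
    obtain b f where qb: "q = (b, f)" by (cases q)
    have a: "a \<in> C" and b: "b \<in> C" using p q pa qb by auto
    have gl: "\<forall>i<n. g i \<in> C \<times> C" "\<forall>i. n \<le> i \<longrightarrow> g i = undefined" using p pa unfolding \<Gamma>_def lg_iff by auto
    have fl: "\<forall>i<n. f i \<in> C \<times> C" "\<forall>i. n \<le> i \<longrightarrow> f i = undefined" using q qb unfolding \<Gamma>_def lg_iff by auto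
    have "H p n = H q n" using eq by simp
    then have ab: "a = b" using pa qb unfolding H_def by simp
    have "g i = f i" for i
    proof (cases "i < n")
      case True
      have "H p i = H q i" using eq by simp
      then have x1: "a \<otimes>\<^bsub>G\<^esub> fst (g i) = a \<otimes>\<^bsub>G\<^esub> fst (f i)"
        and x2: "a \<otimes>\<^bsub>G\<^esub> snd (g i) = a \<otimes>\<^bsub>G\<^esub> snd (f i)"
        using pa qb ab True unfolding H_def by auto
      have c: "fst (g i) \<in> carrier G" "snd (g i) \<in> carrier G" "fst (f i) \<in> carrier G" "snd (f i) \<in> carrier G"
        using gl(1) fl(1) True C_def by (auto simp: mem_Times_iff)
      have "fst (g i) = fst (f i)" using x1 c a C_def by (metis Units_eq Units_l_cancel)
      moreover have "snd (g i) = snd (f i)" using x2 c a C_def by (metis Units_eq Units_l_cancel)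
      ultimately show ?thesis by (simp add: prod_eq_iff)
    next
      case False
      then show ?thesis using gl(2) fl(2) by simp
    qed
    then show "p = q" using pa qb ab by auto
  qed
  have "card B \<le> card (C \<times> \<Gamma>)" using card_inj_on_le[OF injF FB finG] .
  moreover have "card (C \<times> \<Gamma>) \<le> card B" using card_inj_on_le[OF injH HG finB] .
  ultimately have cardeq: "card B = k * card \<Gamma>"
    using card_cartesian_product[of C \<Gamma>] assms(3) C_def by simp
  have "b_count G (n + 1) = card B" unfolding b_count_def B_def C_def by simp
  moreover have "gamma_count G n = card \<Gamma>" unfolding gamma_count_def \<Gamma>_def C_def by simp
  ultimately show ?thesis using cardeq assms(4) by simp
qed

end
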